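(* Let $n_j:=2^{2^j}$ and $t_n:=1/n$. For $j\ge100$, $f_{n_j}(t_{n_j})=0$ and $B_{n_j}(f_{n_j},t_{n_j})\ge\frac{\ln n_j}{16\,n_j}$.
   Context: Nodes: $x_{k,n}:=2k/n-1$, $k=0,\dots,n$. $B_n(f,x):=N_n(f,x)/D_n(x)$ for $x$ not a node, $B_n(f,x_{k,n}):=f(x_{k,n})$, with $N_n(f,x)=\sum_{k=0}^n(-1)^k\frac{f(x_{k,n})}{x-x_{k,n}}$, $D_n(x)=\sum_{k=0}^n(-1)^k\frac{1}{x-x_{k,n}}$. For $m$ such that $\sqrt m$ is an integer multiple of $4$, define $f_m:\mathbb{R}\to\mathbb{R}$ by: $f_m(x)=0$ for $x<1/m$ or $x\ge(\sqrt m-3)/m$; $f_m(x)=x-1/m$ for $1/m\le x<2/m$; $f_m(x)=\frac{4p+3}{m}-x$ for $0\le p\le\frac{\sqrt m-8}{4}$ and $\frac{4p+2}{m}\le x<\frac{4p+4}{m}$; $f_m(x)=x-\frac{4p+1}{m}$ for $1\le p\le\frac{\sqrt m-8}{4}$ and $\frac{4p}{m}\le x<\frac{4p+2}{m}$; $f_m(x)=x-\frac{\sqrt m-3}{m}$ for $\frac{\sqrt m-4}{m}\le x<\frac{\sqrt m-3}{m}$. *)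

theory Defs
  imports Complex_Main
begin

definition node :: "nat \<Rightarrow> nat \<Rightarrow> real" where
  "node n k = 2 * real k / real n - 1"

definition Nn :: "nat \<Rightarrow> (real \<Rightarrow> real) \<Rightarrow> real \<Rightarrow> real" where
  "Nn n f x = (\<Sum>k=0..n. (-1) ^ k * f (node n k) / (x - node n k))"

definition Dn :: "nat \<Rightarrow> real \<Rightarrow> real" where
  "Dn n x = (\<Sum>k=0..n. (-1) ^ k / (x - node n k))"

definition Bn :: "nat \<Rightarrow> (real \<Rightarrow> real) \<Rightarrow> real \<Rightarrow> real" where
  "Bn n f x = (if \<exists>k\<le>n. x = node n k then f x else Nn n f x / Dn n x)"

text \<open>The function f_m (intended for m with sqrt m an integer multiple of 4),
  transcribed piece by piece.\<close>
definition fm :: "nat \<Rightarrow> real \<Rightarrow> real" where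
  "fm m x = (let s = sqrt (real m); M = real m in
     if x < 1/M \<or> x \<ge> (s - 3)/M then 0
     else if 1/M \<le> x \<and> x < 2/M then x - 1/M
     else if \<exists>p::nat. real p \<le> (s - 8)/4 \<and> (4*real p + 2)/M \<le> x \<and> x < (4*real p + 4)/M
       then (4 * real (SOME p::nat. real p \<le> (s - 8)/4 \<and> (4*real p + 2)/M \<le> x \<and> x < (4*real p + 4)/M) + 3)/M - x
     else if \<exists>p::nat. 1 \<le> p \<and> real p \<le> (s - 8)/4 \<and> (4*real p)/M \<le> x \<and> x < (4*real p + 2)/M
       then x - (4 * real (SOME p::nat. 1 \<le> p \<and> real p \<le> (s - 8)/4 \<and> (4*real p)/M \<le> x \<and> x < (4*real p + 2)/M) + 1)/M
     else if (s - 4)/M \<le> x \<and> x < (s - 3)/M then x - (s - 3)/M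
     else 0)"

end

theory Submission
  imports Defs "HOL-Analysis.Harmonic_Numbers"
begin


lemma fm_at:
  fixes n s :: nat and d :: int
  assumes n: "n = s * s" and s4: "4 dvd s" and s8: "s \<ge> 8"
  shows "fm n (of_int (2*d) / real n) =
    (if 1 \<le> d \<and> d \<le> int s div 2 - 2 then (if odd d then 1/real n else -1/real n) else 0)"
proof -
  obtain q where q: "s = 4*q" using s4 by auto
  have q2: "q \<ge> 2" using s8 q by simp
  define M where "M = real n"
  have M0: "M > 0" using M_def n s8 by simp
  have sq: "sqrt M = real s" using n M_def by simp
  define y where "y = real_of_int (2*d)"
  define x where "x = y / M"
  have l1: "\<And>a. (a / M \<le> x) = (a \<le> y)" using M0 unfolding x_def by (simp add: divide_right_mono_neg divide_le_cancel)
  have l2: "\<And>a. (x < a / M) = (y < a)" using M0 unfolding x_def by (simp add: divide_less_cancel)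
  have F: "fm n x = (if y < 1 \<or> real s - 3 \<le> y then 0
     else if 1 \<le> y \<and> y < (2::real) then x - 1/M
     else if \<exists>p::nat. real p \<le> (real s - 8)/4 \<and> 4*real p + 2 \<le> y \<and> y < 4*real p + 4
       then (4 * real (SOME p::nat. real p \<le> (real s - 8)/4 \<and> 4*real p + 2 \<le> y \<and> y < 4*real p + 4) + 3)/M - x
     else if \<exists>p::nat. 1 \<le> p \<and> real p \<le> (real s - 8)/4 \<and> 4*real p \<le> y \<and> y < 4*real p + 2
       then x - (4 * real (SOME p::nat. 1 \<le> p \<and> real p \<le> (real s - 8)/4 \<and> 4*real p \<le> y \<and> y < 4*real p + 2) + 1)/M
     else if real s - 4 \<le> y \<and> y < real s - 3 then x - (real s - 3)/M
     else 0)"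
    unfolding fm_def Let_def M_def[symmetric] sq by (simp only: l1 l2 x_def[symmetric])
  have yd: "y = 2 * real_of_int d" unfolding y_def by simp
  have sq4: "real s = 4 * real q" using q by simp
  have goal: "fm n x = (if 1 \<le> d \<and> d \<le> 2 * int q - 2 then (if odd d then 1/M else -1/M) else 0)"
  proof (cases "1 \<le> d \<and> d \<le> 2 * int q - 2")
    case False
    then have "d \<le> 0 \<or> d \<ge> 2 * int q - 1" by linarith
    then have "real_of_int d \<le> 0 \<or> real_of_int d \<ge> 2 * real q - 1"
    proof
      assume "d \<le> 0" then show ?thesis by simp
    next
      assume "d \<ge> 2 * int q - 1"
      then have "real_of_int (2 * int q - 1) \<le> real_of_int d" by (simp only: of_int_le_iff)
      then show ?thesis by simp
    qed
    then have "y < 1 \<or> real s - 3 \<le> y" using yd sq4 by linarith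
    then have "fm n x = 0" using F by simp
    then show ?thesis using False by auto
  next
    case True
    note T = True
    show ?thesis
    proof (cases "odd d")
      case True
      define p where "p = nat (d div 2)"
      have "d div 2 \<ge> 0" using T by simp
      then have "int p = d div 2" unfolding p_def by simp
      moreover have "d = 2 * (d div 2) + 1" using True by presburger
      ultimately have dp: "d = 2 * int p + 1" by simp
      have pq: "p + 2 \<le> q" using dp T by linarith
      have ydp: "y = 4 * real p + 2" using yd dp by simp
      have rp: "real p \<le> (real s - 8)/4" using pq sq4 by (simp add: field_simps)
      have ex: "\<exists>p'::nat. real p' \<le> (real s - 8)/4 \<and> 4*real p' + 2 \<le> y \<and> y < 4*real p' + 4"
        using rp ydp by auto
      have some: "(SOME p'::nat. real p' \<le> (real s - 8)/4 \<and> 4*real p' + 2 \<le> y \<and> y < 4*real p' + 4) = p"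
      proof (rule some_equality)
        show "real p \<le> (real s - 8)/4 \<and> 4*real p + 2 \<le> y \<and> y < 4*real p + 4" using rp ydp by auto
      next
        fix p' :: nat assume a: "real p' \<le> (real s - 8)/4 \<and> 4*real p' + 2 \<le> y \<and> y < 4*real p' + 4"
        then have "real p' \<le> real p" "real p < real p' + 1" using ydp by linarith+
        then have "p' \<le> p" "real p < real (Suc p')" by simp_all
        then have "p' \<le> p" "p < Suc p'" by (simp_all only: of_nat_less_iff)
        then show "p' = p" by simp
      qed
      have "real (p + 2) \<le> real q" using pq by (simp only: of_nat_le_iff)
      then have "real p + 2 \<le> real q" by simp
      then have "\<not> (y < 1 \<or> real s - 3 \<le> y)" using ydp sq4 by linarith
      moreover have "\<not> (1 \<le> y \<and> y < 2)" using ydp by simp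
      ultimately have "fm n x = (4 * real p + 3)/M - x" using F ex some by simp
      also have "\<dots> = 1/M" unfolding x_def ydp using M0 by (simp add: field_simps)
      finally show ?thesis using T True by simp
    next
      case False
      note E = False
      define p where "p = nat (d div 2)"
      have "d div 2 \<ge> 0" using T by simp
      then have "int p = d div 2" unfolding p_def by simp
      moreover have "d = 2 * (d div 2)" using E by presburger
      ultimately have dp: "d = 2 * int p" by simp
      have p1: "1 \<le> p" "p + 1 \<le> q" using dp T by linarith+
      have "real (p + 1) \<le> real q" using p1 by (simp only: of_nat_le_iff)
      then have rpq: "real p + 1 \<le> real q" by simp
      have rp1: "1 \<le> real p" using p1 by simp
      have ydp: "y = 4 * real p" using yd dp by simp
      have n1: "\<not> (y < 1 \<or> real s - 3 \<le> y)" using ydp sq4 rpq rp1 by linarith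
      have n2: "\<not> (1 \<le> y \<and> y < 2)" using ydp rp1 by linarith
      have n3: "\<not> (\<exists>p'::nat. real p' \<le> (real s - 8)/4 \<and> 4*real p' + 2 \<le> y \<and> y < 4*real p' + 4)"
      proof
        assume "\<exists>p'::nat. real p' \<le> (real s - 8)/4 \<and> 4*real p' + 2 \<le> y \<and> y < 4*real p' + 4"
        then obtain p' :: nat where "4*real p' + 2 \<le> y" "y < 4*real p' + 4" by blast
        then have "real p' < real p" "real p < real (Suc p')" using ydp by simp_all
        then have "p' < p" "p < Suc p'" by (simp_all only: of_nat_less_iff)
        then show False by simp
      qed
      have uq: "p' = p" if "4*real p' \<le> y" "y < 4*real p' + 2" for p' :: nat
      proof -
        have "real p' \<le> real p" "real p < real (Suc p')" using that ydp by simp_all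
        then have "p' \<le> p" "p < Suc p'" by (simp_all only: of_nat_less_iff of_nat_le_iff)
        then show "p' = p" by simp
      qed
      show ?thesis
      proof (cases "p + 2 \<le> q")
        case True
        have "real (p + 2) \<le> real q" using True by (simp only: of_nat_le_iff)
        then have "real p + 2 \<le> real q" by simp
        then have rp: "real p \<le> (real s - 8)/4" using sq4 by (simp add: field_simps)
        have ex: "\<exists>p'::nat. 1 \<le> p' \<and> real p' \<le> (real s - 8)/4 \<and> 4*real p' \<le> y \<and> y < 4*real p' + 2"
          using rp ydp p1 by auto
        have some: "(SOME p'::nat. 1 \<le> p' \<and> real p' \<le> (real s - 8)/4 \<and> 4*real p' \<le> y \<and> y < 4*real p' + 2) = p"
        proof (rule some_equality)
          show "1 \<le> p \<and> real p \<le> (real s - 8)/4 \<and> 4*real p \<le> y \<and> y < 4*real p + 2" using rp ydp p1 by simp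
        next
          fix p' :: nat assume "1 \<le> p' \<and> real p' \<le> (real s - 8)/4 \<and> 4*real p' \<le> y \<and> y < 4*real p' + 2"
          then show "p' = p" using uq by blast
        qed
        have "fm n x = x - (4 * real p + 1)/M" by (subst F, simp only: if_not_P[OF n1] if_not_P[OF n2] if_not_P[OF n3] if_P[OF ex] some)
        also have "\<dots> = -1/M" unfolding x_def ydp using M0 by (simp add: field_simps)
        finally show ?thesis using T E by simp
      next
        case False
        then have "q = p + 1" using p1 by simp
        then have qp: "real q = real p + 1" by simp
        have n4: "\<not> (\<exists>p'::nat. 1 \<le> p' \<and> real p' \<le> (real s - 8)/4 \<and> 4*real p' \<le> y \<and> y < 4*real p' + 2)"
        proof
          assume "\<exists>p'::nat. 1 \<le> p' \<and> real p' \<le> (real s - 8)/4 \<and> 4*real p' \<le> y \<and> y < 4*real p' + 2"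
          then obtain p' :: nat where "real p' \<le> (real s - 8)/4" "4*real p' \<le> y" "y < 4*real p' + 2" by blast
          then have "p' = p" "4 * real p' \<le> real s - 8" using uq by (auto simp: field_simps)
          then show False using sq4 qp by simp
        qed
        have n5: "real s - 4 \<le> y \<and> y < real s - 3" using sq4 qp ydp by simp
        have "fm n x = x - (real s - 3)/M" by (subst F, simp only: if_not_P[OF n1] if_not_P[OF n2] if_not_P[OF n3] if_not_P[OF n4] if_P[OF n5])
        also have "\<dots> = -1/M" unfolding x_def ydp sq4 qp using M0 by (simp add: field_simps)
        finally show ?thesis using T E by simp
      qed
    qed
  qed
  show ?thesis using goal unfolding x_def y_def M_def using q by simp
qed


definition Balt :: "nat \<Rightarrow> real" where
  "Balt L = (\<Sum>l<L. (-1)^l / (2*real l + 1))"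

lemma Balt_prop: "Balt (Suc (2*m)) = Balt (2*m) + 1/(4*real m+1) \<and> 0 \<le> Balt (2*m) \<and> Balt (Suc (2*m)) \<le> 1"
proof (induction m)
  case 0
  then show ?case by (simp add: Balt_def)
next
  case (Suc m)
  have e1: "Balt (2*Suc m) = Balt (Suc (2*m)) - 1/(4*real m+3)"
    by (simp add: Balt_def field_simps)
  have e2: "Balt (Suc (2*Suc m)) = Balt (2*Suc m) + 1/(4*real (Suc m)+1)"
    by (simp add: Balt_def field_simps)
  have i1: "1/(4*real m+3) \<le> 1/(4*real m+1)" by (simp add: frac_le)
  have i2: "1/(4*real (Suc m)+1) \<le> 1/(4*real m+3)" by (simp add: frac_le)
  show ?case using Suc e1 e2 i1 i2 by linarith
qed

lemma harm_bound: "(\<Sum>e=1..L. 1/(2*real e - 1)) \<ge> ln (real L + 1) / 2"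
proof -
  have "(\<Sum>e=1..L. 1/(2*real e - 1)) \<ge> (\<Sum>e=1..L. 1/(2*real e))"
    by (intro sum_mono) (simp add: frac_le)
  also have "(\<Sum>e=1..L. 1/(2*real e)) = harm L / 2"
    unfolding harm_def by (simp add: sum_divide_distrib field_simps)
  finally show ?thesis using ln_le_harm[of L] by linarith
qed



lemma negpow_diff: "even h \<Longrightarrow> i \<le> h \<Longrightarrow> (-1::real)^(h-i) = (-1)^i"
proof -
  assume "even h" "i \<le> h"
  then have "even (h - i) = even i" by (metis even_add le_add_diff_inverse2)
  then show ?thesis by (simp add: minus_one_power_iff)
qed

lemma negpow_add: "even h \<Longrightarrow> (-1::real)^(e+h) = (-1)^e"
  by (simp add: power_add)

lemma main:
  fixes s n :: nat
  assumes n: "n = s * s" and s4: "4 dvd s" and s8: "s \<ge> 8"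
  shows "fm n (1/real n) = 0 \<and> Bn n (fm n) (1/real n) \<ge> ln (real n)/(16*real n)"
proof -
  obtain q where q: "s = 4*q" using s4 by auto
  have q2: "q \<ge> 2" using s8 q by simp
  define h where "h = 8*q*q"
  define m where "m = 4*q*q"
  have nh: "n = 2*h" using n q h_def by simp
  have hm: "h = 2*m" unfolding h_def m_def by simp
  have heven: "even h" by (simp add: h_def)
  have h1: "h \<ge> 1" using q2 h_def by simp
  have M0: "real n > 0" using n s8 by simp
  have sq: "sqrt (real n) = real s" using n by simp
  have A: "fm n (1/real n) = 0"
  proof -
    have "real s - 3 > 1" using s8 by simp
    then have c1: "\<not> (1/real n < 1/real n \<or> 1/real n \<ge> (real s - 3)/real n)" using M0 by (simp add: divide_le_cancel)
    have c2: "1/real n \<le> 1/real n \<and> 1/real n < 2/real n" using M0 by (simp add: divide_less_cancel)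
    show ?thesis unfolding fm_def Let_def sq by (simp only: if_not_P[OF c1] if_P[OF c2])
  qed
  have den: "1/real n - node n k = (1 - 2*(real k - real h))/real n" for k
    using M0 by (simp add: node_def nh field_simps)
  have den0: "1 - 2*(real k - real h) \<noteq> 0" for k
  proof
    assume "1 - 2*(real k - real h) = 0"
    then have "real (2*k) = real (2*h+1)" by simp
    then have "2*k = 2*h+1" by (simp only: of_nat_eq_iff)
    then show False by presburger
  qed
  have notnode: "\<not> (\<exists>k\<le>n. 1/real n = node n k)"
  proof
    assume "\<exists>k\<le>n. 1/real n = node n k"
    then obtain k where "1/real n = node n k" by blast
    then have "1/real n - node n k = 0" by simp
    then show False using den[of k] den0[of k] M0 by simp
  qed
  define g where "g k = (-1::real)^k / (1 - 2*(real k - real h))" for k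
  have D1: "Dn n (1/real n) = real n * (\<Sum>k=0..n. g k)"
    unfolding Dn_def sum_distrib_left
    by (rule sum.cong) (use M0 den in \<open>auto simp: g_def\<close>)
  have "(\<Sum>k=0..n. g k) = (\<Sum>k=0..h. g k) + (\<Sum>k=h+1..h+h. g k)"
    unfolding nh mult_2 by (rule sum.ub_add_nat) simp
  also have "(\<Sum>k=0..h. g k) = (\<Sum>i=0..h. g (h + 0 - i))" by (rule sum.atLeastAtMost_rev)
  also have "\<dots> = Balt (Suc h)"
    unfolding Balt_def lessThan_Suc_atMost atLeast0AtMost[symmetric]
    by (rule sum.cong) (auto simp: g_def negpow_diff[OF heven] of_nat_diff)
  also have "(\<Sum>k=h+1..h+h. g k) = (\<Sum>e=1..h. g (e + h))"
    using sum.shift_bounds_cl_nat_ivl[of g 1 h h] by (simp add: add.commute)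
  also have "\<dots> = (\<Sum>l<h. g (Suc l + h))"
    using sum.atLeast1_atMost_eq[of "\<lambda>e. g (e+h)" h] by simp
  also have "\<dots> = Balt h"
    unfolding Balt_def
    by (rule sum.cong) (auto simp: g_def negpow_add[OF heven] field_simps)
  finally have D: "Dn n (1/real n) = real n * (Balt (Suc h) + Balt h)" using D1 by simp
  have Bp: "0 < Balt (Suc h) + Balt h" "Balt (Suc h) + Balt h \<le> 2"
  proof -
    have P: "Balt (Suc (2*m)) = Balt (2*m) + 1/(4*real m+1)" "0 \<le> Balt (2*m)" "Balt (Suc (2*m)) \<le> 1"
      using Balt_prop[of m] by auto
    have "0 < 1/(4*real m+1)" by simp
    then show "0 < Balt (Suc h) + Balt h" "Balt (Suc h) + Balt h \<le> 2" using P unfolding hm by linarith+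
  qed
  define L where "L = 2*q - 2"
  have sL: "int s div 2 - 2 = int L" unfolding L_def q using q2 by simp
  have nodeq: "node n k = of_int (2*(int k - int h)) / real n" for k
    using M0 by (simp add: node_def nh field_simps)
  define G where "G k = 1/(2*(real k - real h) - 1)" for k
  have termk: "(-1)^k * fm n (node n k) / (1/real n - node n k) = (if k \<in> {h+1..h+L} then G k else 0)" for k
  proof (cases "k \<in> {h+1..h+L}")
    case True
    define e where "e = k - h"
    have e: "k = e + h" "1 \<le> e" "e \<le> L" using True unfolding e_def by auto
    have de: "int k - int h = int e" using e by simp
    have fv: "fm n (node n k) = (if odd e then 1/real n else -1/real n)"
      unfolding nodeq de using fm_at[OF n s4 s8, of "int e"] e sL by simp
    have sg: "(-1::real)^k = (-1)^e" unfolding e(1) by (rule negpow_add[OF heven])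
    have dd: "1 - 2*(real k - real h) \<noteq> 0" by (rule den0)
    have "(-1)^k * fm n (node n k) / (1/real n - node n k) = G k"
      unfolding fv sg den G_def using M0 dd e(1)
      by (cases "odd e") (auto simp: minus_one_power_iff field_simps)
    then show ?thesis using True by simp
  next
    case False
    then have nc: "\<not> (1 \<le> int k - int h \<and> int k - int h \<le> int s div 2 - 2)" unfolding sL by auto
    have "fm n (node n k) = (if 1 \<le> int k - int h \<and> int k - int h \<le> int s div 2 - 2 then (if odd (int k - int h) then 1/real n else -1/real n) else 0)"
      unfolding nodeq by (rule fm_at[OF n s4 s8])
    then have "fm n (node n k) = 0" by (simp only: if_not_P[OF nc])
    then show ?thesis using False by auto
  qed
  have "q \<le> q * q" by simp
  then have Lh: "L + h \<le> n" unfolding nh L_def h_def by linarith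
  have "Nn n (fm n) (1/real n) = (\<Sum>k=0..n. if k \<in> {h+1..h+L} then G k else 0)"
    unfolding Nn_def using termk by simp
  also have "\<dots> = (\<Sum>k\<in>{0..n} \<inter> {h+1..h+L}. G k)" by (rule sum.inter_restrict[symmetric]) simp
  also have "{0..n} \<inter> {h+1..h+L} = {1+h..L+h}" using Lh by auto
  also have "(\<Sum>k\<in>{1+h..L+h}. G k) = (\<Sum>e=1..L. G (e + h))" by (rule sum.shift_bounds_cl_nat_ivl)
  also have "\<dots> = (\<Sum>e=1..L. 1/(2*real e - 1))" by (rule sum.cong) (auto simp: G_def)
  finally have N: "Nn n (fm n) (1/real n) = (\<Sum>e=1..L. 1/(2*real e - 1))" .
  have Nb: "Nn n (fm n) (1/real n) \<ge> ln (real L + 1) / 2" unfolding N by (rule harm_bound)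
  have rL: "real L + 1 = 2 * real q - 1" unfolding L_def using q2 by (simp add: of_nat_diff)
  have rq2: "2 \<le> real q" using q2 by simp
  have "0 \<le> real q * (real q - 2)" using rq2 by (intro mult_nonneg_nonneg) auto
  moreover have "(2*real q - 1)^2 = 4*(real q * real q) - 4*real q + 1" by (simp add: power2_eq_square algebra_simps)
  ultimately have "real s \<le> (real L + 1)^2" unfolding rL q by (simp add: algebra_simps)
  then have "ln (real s) \<le> ln ((real L + 1)^2)" using s8 by (intro ln_mono) auto
  also have "\<dots> = 2 * ln (real L + 1)" using ln_realpow[of "real L + 1" 2] by simp
  finally have l1: "ln (real s) \<le> 2 * ln (real L + 1)" .
  have l2: "ln (real n) = 2 * ln (real s)" unfolding n using s8 by (simp add: ln_mult)
  have lnL: "0 \<le> ln (real L + 1)" by simp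
  have Bv: "Bn n (fm n) (1/real n) = Nn n (fm n) (1/real n) / (real n * (Balt (Suc h) + Balt h))"
    unfolding Bn_def by (simp only: if_not_P[OF notnode] D)
  have "ln (real n)/(16*real n) \<le> (ln (real L + 1) / 2) / (2 * real n)"
    using M0 l1 l2 by (simp add: field_simps)
  also have "\<dots> \<le> Nn n (fm n) (1/real n) / (2 * real n)"
    by (rule divide_right_mono) (use M0 Nb in auto)
  also have "\<dots> \<le> Nn n (fm n) (1/real n) / (real n * (Balt (Suc h) + Balt h))"
  proof (rule divide_left_mono)
    show "0 \<le> Nn n (fm n) (1/real n)" using Nb lnL by linarith
    show "real n * (Balt (Suc h) + Balt h) \<le> 2 * real n" using M0 Bp by simp
    show "0 < 2 * real n * (real n * (Balt (Suc h) + Balt h))" using M0 Bp by simp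
  qed
  finally show ?thesis using A Bv by simp
qed


theorem lemma2:
  fixes j :: nat
  assumes "j \<ge> 100"
  defines "n \<equiv> (2::nat) ^ (2 ^ j)"
  shows "fm n (1 / real n) = 0 \<and> Bn n (fm n) (1 / real n) \<ge> ln (real n) / (16 * real n)"
proof -
  define t where "t = (2::nat) ^ (j - 1)"
  define s where "s = (2::nat) ^ t"
  have jt: "2 ^ j = 2 * t" unfolding t_def using assms(1) by (metis Suc_diff_1 less_le_trans zero_less_numeral power_Suc le_refl zero_less_iff_neq_zero not_numeral_le_zero)
  have ns: "n = s * s" unfolding n_def s_def jt by (simp add: mult_2 power_add)
  have "j - 1 < 2 ^ (j - 1)" by (rule less_exp)
  then have t3: "t \<ge> 3" unfolding t_def using assms(1) by linarith
  have "(2::nat) ^ 3 \<le> 2 ^ t" using t3 by (rule power_increasing) simp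
  then have s8: "s \<ge> 8" unfolding s_def by simp
  have "t = 2 + (t - 2)" using t3 by simp
  then have "s = 2^2 * 2^(t-2)" unfolding s_def by (metis power_add)
  then have s4: "4 dvd s" by simp
  show ?thesis using main[OF ns s4 s8] .
qed

end
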